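(* Let $F,G$ be planar forests, and let $S(F,G)$ be the set of bijections $\sigma:\mathrm{Vert}(F)\to\mathrm{Vert}(G)$ such that for all vertices $x,y$ of $F$: (1) if $y\geq_{high}x$ then $\sigma(x)\geq_{left}\sigma(y)$; (2) if $y\geq_{left}x$ then $\sigma(x)\geq_{h,l}\sigma(y)$; (3) if $\sigma(y)\geq_{high}\sigma(x)$ then $x\geq_{left}y$; (4) if $\sigma(y)\geq_{left}\sigma(x)$ then $x\geq_{h,l}y$. Then $\langle F,G\rangle=\mathrm{card}(S(F,G))$.
   Context: Let $K$ be a field. Planar rooted trees have their children linearly ordered left to right; a planar forest is a finite, possibly empty, sequence $t_1\cdots t_n$ of planar rooted trees ($1$ = empty forest); $\mathrm{Vert}(F)$ is the vertex set of $F$. $\mathcal{H}$ is the free associative unital $K$-algebra on planar rooted trees, with basis the planar forests and product concatenation. $B^+(F)$ is the tree obtained by grafting the trees of $F$ (in order) on a new common root. $\varepsilon(F)=\delta_{F,1}$. $\Delta$ is the unique linear map with $\Delta(1)=1\otimes1$, $\Delta(xy)=(x\otimes1)\Delta(y)+\Delta(x)(1\otimes y)-x\otimes y$, $\Delta(B^+(x))=B^+(x)\otimes 1+(\mathrm{Id}\otimes B^+)\Delta(x)$. $\gamma$ is linear with $\gamma(t_1\cdots t_n)=\delta_{t_1,\bullet}t_2\cdots t_n$ ($\bullet$ the one-vertex tree), $\gamma(1)=0$. $\langle-,-\rangle$ is the unique bilinear form on $\mathcal{H}$ with $\langle1,x\rangle=\varepsilon(x)$, $\langle xy,z\rangle=\langle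 y\otimes x,\Delta(z)\rangle$ (with $\langle a\otimes b,c\otimes d\rangle=\langle a,c\rangle\langle b,d\rangle$) and $\langle B^+(x),y\rangle=\langle x,\gamma(y)\rangle$. Orders on vertices of a forest $t_1\cdots t_n$: $s\geq_{high}s'$ iff $s'=s$ or $s'$ is an ancestor of $s$; for $\geq_{high}$-incomparable $s,s'$, $s\geq_{left}s'$ iff $s\in t_i,s'\in t_j$ with $i<j$, or both lie in $t_i$ and $s\geq_{left}s'$ in the forest obtained from $t_i$ by deleting its root (recursively); $s\geq_{h,l}s'$ iff $s\geq_{high}s'$ or $s\geq_{left}s'$ (a total order). *)

theory Defs
  imports "HOL-Library.Poly_Mapping" "HOL-Library.FuncSet" "HOL-Library.Sublist"
begin

text \<open>A planar rooted tree is a root together with the (left-to-right ordered) list of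
  its subtrees; a planar forest is a (possibly empty) list of planar trees.\<close>

datatype ptree = Node "ptree list"

type_synonym pforest = "ptree list"

abbreviation dot :: ptree where "dot \<equiv> Node []"

definition Bplus :: "pforest \<Rightarrow> pforest" where
  "Bplus F = [Node F]"

text \<open>An element of H is a finitely supported K-linear combination of planar forests;
  an element of H (x) H is a finitely supported linear combination of pairs of forests
  (basis F (x) G).  The product of H is concatenation of forests.\<close>

type_synonym 'k hopf = "pforest \<Rightarrow>\<^sub>0 'k"
type_synonym 'k hopf2 = "(pforest \<times> pforest) \<Rightarrow>\<^sub>0 'k"

definition tens :: "pforest \<Rightarrow> pforest \<Rightarrow> 'k::field hopf2" where
  "tens F G = Poly_Mapping.single (F, G) 1"

text \<open>(x (x) 1) * T for a basis forest x\<close>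
definition lmul :: "pforest \<Rightarrow> 'k::field hopf2 \<Rightarrow> 'k hopf2" where
  "lmul x T = (\<Sum>k\<in>Poly_Mapping.keys T. Poly_Mapping.single (x @ fst k, snd k) (Poly_Mapping.lookup T k))"

text \<open>T * (1 (x) y) for a basis forest y\<close>
definition rmul :: "'k::field hopf2 \<Rightarrow> pforest \<Rightarrow> 'k hopf2" where
  "rmul T y = (\<Sum>k\<in>Poly_Mapping.keys T. Poly_Mapping.single (fst k, snd k @ y) (Poly_Mapping.lookup T k))"

text \<open>(Id (x) B+) T\<close>
definition id_Bplus :: "'k::field hopf2 \<Rightarrow> 'k hopf2" where
  "id_Bplus T = (\<Sum>k\<in>Poly_Mapping.keys T. Poly_Mapping.single (fst k, Bplus (snd k)) (Poly_Mapping.lookup T k))"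

definition eps :: "pforest \<Rightarrow> 'k::field" where
  "eps F = (if F = [] then 1 else 0)"

text \<open>The coproduct is the unique linear map with the three stated properties. A linear
  map is determined by its values on the basis of forests, and the product of two basis
  forests is again a basis forest, so the properties (for all x, y in H) amount to the
  following properties of the values on basis forests.\<close>

definition is_coproduct :: "(pforest \<Rightarrow> 'k::field hopf2) \<Rightarrow> bool" where
  "is_coproduct D \<longleftrightarrow>
     D [] = tens [] [] \<and>
     (\<forall>x y. D (x @ y) = lmul x (D y) + rmul (D x) y - tens x y) \<and>
     (\<forall>x. D (Bplus x) = tens (Bplus x) [] + id_Bplus (D x))"

definition Delta :: "pforest \<Rightarrow> 'k::field hopf2" where
  "Delta = (THE D. is_coproduct D)"

definition gamma :: "pforest \<Rightarrow> 'k::field hopf" where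
  "gamma F = (case F of (t # G) \<Rightarrow> (if t = dot then Poly_Mapping.single G 1 else 0)
                       | [] \<Rightarrow> 0)"

text \<open>A bilinear form on H is determined by its values p F G on pairs of basis forests;
  its bilinear extension is the following.\<close>

definition pair_ext :: "(pforest \<Rightarrow> pforest \<Rightarrow> 'k::field) \<Rightarrow> 'k hopf \<Rightarrow> 'k hopf \<Rightarrow> 'k" where
  "pair_ext p a b = (\<Sum>F\<in>Poly_Mapping.keys a. \<Sum>G\<in>Poly_Mapping.keys b. Poly_Mapping.lookup a F * Poly_Mapping.lookup b G * p F G)"

text \<open>pairing of H (x) H with H (x) H: <a (x) b, c (x) d> = <a,c><b,d>, for a (x) b = y (x) x
  with y, x basis forests.\<close>
definition pair_tens :: "(pforest \<Rightarrow> pforest \<Rightarrow> 'k::field) \<Rightarrow> pforest \<Rightarrow> pforest \<Rightarrow> 'k hopf2 \<Rightarrow> 'k" where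
  "pair_tens p a b T = (\<Sum>k\<in>Poly_Mapping.keys T. Poly_Mapping.lookup T k * p a (fst k) * p b (snd k))"

text \<open>The defining properties of the pairing, for all x, y, z in H; by bilinearity it
  suffices (and is necessary) to require them on basis forests.\<close>
definition is_pairing :: "(pforest \<Rightarrow> pforest \<Rightarrow> 'k::field) \<Rightarrow> bool" where
  "is_pairing p \<longleftrightarrow>
     (\<forall>z. p [] z = eps z) \<and>
     (\<forall>x y z. p (x @ y) z = pair_tens p y x (Delta z)) \<and>
     (\<forall>x y. p (Bplus x) y = pair_ext p (Poly_Mapping.single x 1) (gamma y))"

definition pairing :: "pforest \<Rightarrow> pforest \<Rightarrow> 'k::field" where
  "pairing = (THE p. is_pairing p)"

text \<open>A vertex of a forest t1...tn is encoded by its address: the nonempty list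
  [i, c1, ..., cm] meaning: tree t_(i+1), then child number c1 of its root, etc.
  (0-based indices).\<close>

fun tree_verts :: "ptree \<Rightarrow> nat list set"
and forest_verts_from :: "nat \<Rightarrow> pforest \<Rightarrow> nat list set" where
  "tree_verts (Node ts) = insert [] (forest_verts_from 0 ts)"
| "forest_verts_from n [] = {}"
| "forest_verts_from n (t # ts) = (Cons n ` tree_verts t) \<union> forest_verts_from (Suc n) ts"

definition Vert :: "pforest \<Rightarrow> nat list set" where
  "Vert F = forest_verts_from 0 F"

text \<open>s >=_high s' iff s' = s or s' is an ancestor of s, i.e. the address of s' is a
  prefix of the address of s.\<close>
definition geq_high :: "nat list \<Rightarrow> nat list \<Rightarrow> bool" where
  "geq_high s s' \<longleftrightarrow> prefix s' s"

text \<open>The recursive left-to-right comparison: s in t_i, s' in t_j with i < j, or both in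
  the same tree and recursively in the forest obtained by deleting its root.\<close>
fun left_rec :: "nat list \<Rightarrow> nat list \<Rightarrow> bool" where
  "left_rec (i # p) (j # q) = (i < j \<or> (i = j \<and> left_rec p q))"
| "left_rec _ _ = False"

definition geq_left :: "nat list \<Rightarrow> nat list \<Rightarrow> bool" where
  "geq_left s s' \<longleftrightarrow> \<not> geq_high s s' \<and> \<not> geq_high s' s \<and> left_rec s s'"

definition geq_hl :: "nat list \<Rightarrow> nat list \<Rightarrow> bool" where
  "geq_hl s s' \<longleftrightarrow> geq_high s s' \<or> geq_left s s'"

text \<open>The four conditions are imposed for distinct vertices x, y (for x = y condition (1)
  would demand sigma(x) >=_left sigma(x), which never holds, making S(F,G) empty; the
  orders are meant strictly).\<close>

definition Sbij :: "pforest \<Rightarrow> pforest \<Rightarrow> (nat list \<Rightarrow> nat list) set" where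
  "Sbij F G = {\<sigma>. \<sigma> \<in> extensional (Vert F) \<and> bij_betw \<sigma> (Vert F) (Vert G) \<and>
     (\<forall>x\<in>Vert F. \<forall>y\<in>Vert F. x \<noteq> y \<longrightarrow>
        (geq_high y x \<longrightarrow> geq_left (\<sigma> x) (\<sigma> y)) \<and>
        (geq_left y x \<longrightarrow> geq_hl (\<sigma> x) (\<sigma> y)) \<and>
        (geq_high (\<sigma> y) (\<sigma> x) \<longrightarrow> geq_left x y) \<and>
        (geq_left (\<sigma> y) (\<sigma> x) \<longrightarrow> geq_hl x y))}"

end

theory Submission
  imports Defs
begin


definition lin :: "('a \<Rightarrow> 'b) \<Rightarrow> ('a \<Rightarrow>\<^sub>0 'k::field) \<Rightarrow> ('b \<Rightarrow>\<^sub>0 'k)" where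
  "lin f T = (\<Sum>k\<in>Poly_Mapping.keys T. Poly_Mapping.single (f k) (Poly_Mapping.lookup T k))"

lemma lin_superset:
  assumes "finite S" "Poly_Mapping.keys T \<subseteq> S"
  shows "lin f T = (\<Sum>k\<in>S. Poly_Mapping.single (f k) (Poly_Mapping.lookup T k))"
  unfolding lin_def
  by (rule sum.mono_neutral_left) (auto simp: assms in_keys_iff)

lemma lin_add: "lin f (A + B) = lin f A + lin f B"
proof -
  let ?S = "Poly_Mapping.keys A \<union> Poly_Mapping.keys B"
  have "lin f (A + B) = (\<Sum>k\<in>?S. Poly_Mapping.single (f k) (Poly_Mapping.lookup (A+B) k))"
    by (rule lin_superset) (auto simp: keys_add)
  also have "\<dots> = (\<Sum>k\<in>?S. Poly_Mapping.single (f k) (Poly_Mapping.lookup A k))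
     + (\<Sum>k\<in>?S. Poly_Mapping.single (f k) (Poly_Mapping.lookup B k))"
    by (simp add: lookup_add single_add sum.distrib)
  also have "\<dots> = lin f A + lin f B"
    by (subst (1 2) lin_superset[of ?S]) auto
  finally show ?thesis .
qed

lemma lin_zero[simp]: "lin f 0 = 0"
  by (simp add: lin_def)

lemma lin_single[simp]: "lin f (Poly_Mapping.single k c) = Poly_Mapping.single (f k) c"
  by (cases "c = 0") (simp_all add: lin_def)

lemma lin_diff: "lin f (A - B) = lin f A - lin f B"
proof -
  have "lin f A = lin f ((A - B) + B)" by simp
  also have "\<dots> = lin f (A - B) + lin f B" by (rule lin_add)
  finally show ?thesis by simp
qed

lemma lin_sum: "lin f (\<Sum>i\<in>I. T i) = (\<Sum>i\<in>I. lin f (T i))"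
  by (induction I rule: infinite_finite_induct) (simp_all add: lin_add)

definition fl :: "('a \<Rightarrow> 'k::field) \<Rightarrow> ('a \<Rightarrow>\<^sub>0 'k) \<Rightarrow> 'k" where
  "fl g T = (\<Sum>k\<in>Poly_Mapping.keys T. Poly_Mapping.lookup T k * g k)"

lemma fl_superset:
  assumes "finite S" "Poly_Mapping.keys T \<subseteq> S"
  shows "fl g T = (\<Sum>k\<in>S. Poly_Mapping.lookup T k * g k)"
  unfolding fl_def
  by (rule sum.mono_neutral_left) (auto simp: assms in_keys_iff)

lemma fl_add: "fl g (A + B) = fl g A + fl g B"
proof -
  let ?S = "Poly_Mapping.keys A \<union> Poly_Mapping.keys B"
  have "fl g (A + B) = (\<Sum>k\<in>?S. Poly_Mapping.lookup (A+B) k * g k)"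
    by (rule fl_superset) (auto simp: keys_add)
  also have "\<dots> = (\<Sum>k\<in>?S. Poly_Mapping.lookup A k * g k)
     + (\<Sum>k\<in>?S. Poly_Mapping.lookup B k * g k)"
    by (simp add: lookup_add sum.distrib algebra_simps)
  also have "\<dots> = fl g A + fl g B"
    by (subst (1 2) fl_superset[of ?S]) auto
  finally show ?thesis .
qed

lemma fl_zero[simp]: "fl g 0 = 0"
  by (simp add: fl_def)

lemma fl_single[simp]: "fl g (Poly_Mapping.single k c) = c * g k"
  by (cases "c = 0") (simp_all add: fl_def)

lemma fl_sum: "fl g (\<Sum>i\<in>I. T i) = (\<Sum>i\<in>I. fl g (T i))"
  by (induction I rule: infinite_finite_induct) (simp_all add: fl_add)

lemma lmul_lin: "lmul x = lin (\<lambda>k. (x @ fst k, snd k))"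
  by (rule ext) (simp add: lmul_def lin_def)
lemma rmul_lin: "rmul T y = lin (\<lambda>k. (fst k, snd k @ y)) T"
  by (simp add: rmul_def lin_def)
lemma id_Bplus_lin: "id_Bplus = lin (\<lambda>k. (fst k, Bplus (snd k)))"
  by (rule ext) (simp add: id_Bplus_def lin_def)
lemma pair_tens_fl: "pair_tens p a b T = fl (\<lambda>k. p a (fst k) * p b (snd k)) T"
  by (simp add: pair_tens_def fl_def mult.assoc)



lemma forest_induct:
  assumes "P []" "\<And>f ts. P f \<Longrightarrow> P ts \<Longrightarrow> P (Node f # ts)"
  shows "P F"
proof (induction F rule: measure_induct_rule[of "size_list size"])
  case (less F)
  show ?case
  proof (cases F)
    case Nil then show ?thesis using assms(1) by simp
  next
    case (Cons t ts)
    obtain f where t: "t = Node f" by (cases t)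
    show ?thesis using less Cons t assms(2) by simp
  qed
qed

fun nvf :: "pforest \<Rightarrow> nat" where
  "nvf [] = 0"
| "nvf (Node f # ts) = Suc (nvf f) + nvf ts"

lemma nvf_append[simp]: "nvf (x @ y) = nvf x + nvf y"
  by (induction x rule: forest_induct) auto

fun topk :: "nat \<Rightarrow> pforest \<Rightarrow> pforest" where
  "topk k [] = []"
| "topk k (Node f # ts) = (if Suc (nvf f) \<le> k then Node f # topk (k - Suc (nvf f)) ts else topk k f)"

fun botk :: "nat \<Rightarrow> pforest \<Rightarrow> pforest" where
  "botk k [] = []"
| "botk k (Node f # ts) = (if Suc (nvf f) \<le> k then botk (k - Suc (nvf f)) ts else Node (botk k f) # ts)"

lemma topk_all: "topk (nvf x) x = x"
  by (induction x rule: forest_induct) auto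
lemma botk_all: "botk (nvf x) x = []"
  by (induction x rule: forest_induct) auto

lemma topk_append: "topk k (x @ y) = (if nvf x \<le> k then x @ topk (k - nvf x) y else topk k x)"
  by (induction x arbitrary: k rule: forest_induct) (auto simp: topk_all)
lemma botk_append: "botk k (x @ y) = (if nvf x \<le> k then botk (k - nvf x) y else botk k x @ y)"
  by (induction x arbitrary: k rule: forest_induct) (auto simp: botk_all)

lemma nvf_topk: "k \<le> nvf z \<Longrightarrow> nvf (topk k z) = k"
  by (induction k z rule: topk.induct) auto

definition Dc :: "pforest \<Rightarrow> 'k::field hopf2" where
  "Dc z = (\<Sum>k\<in>{0..nvf z}. tens (topk k z) (botk k z))"

lemma lmul_tens[simp]: "lmul x (tens a b) = tens (x @ a) b"
  by (simp add: lmul_lin tens_def)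
lemma rmul_tens[simp]: "rmul (tens a b) y = tens a (b @ y)"
  by (simp add: rmul_lin tens_def)
lemma idB_tens[simp]: "id_Bplus (tens a b) = tens a (Bplus b)"
  by (simp add: id_Bplus_lin tens_def)

lemma lmul_sum: "lmul x (\<Sum>i\<in>I. T i) = (\<Sum>i\<in>I. lmul x (T i))"
  by (simp add: lmul_lin lin_sum)
lemma rmul_sum: "rmul (\<Sum>i\<in>I. T i) y = (\<Sum>i\<in>I. rmul (T i) y)"
  by (simp add: rmul_lin lin_sum)
lemma idB_sum: "id_Bplus (\<Sum>i\<in>I. T i) = (\<Sum>i\<in>I. id_Bplus (T i))"
  by (simp add: id_Bplus_lin lin_sum)

lemma Dc_nil: "Dc [] = tens [] []"
  by (simp add: Dc_def)

lemma Dc_append: "(Dc (x @ y) :: 'k::field hopf2) = lmul x (Dc y) + rmul (Dc x) y - tens x y"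
proof -
  let ?nx = "nvf x" and ?ny = "nvf y"
  have split: "{0..?nx + ?ny} = {0..<?nx} \<union> {?nx..?nx+?ny}" by auto
  have "(Dc (x @ y) :: 'k hopf2) = (\<Sum>k\<in>{0..<?nx}. tens (topk k (x@y)) (botk k (x@y)))
     + (\<Sum>k\<in>{?nx..?nx+?ny}. tens (topk k (x@y)) (botk k (x@y)))"
    unfolding Dc_def nvf_append split by (rule sum.union_disjoint) auto
  also have "(\<Sum>k\<in>{0..<?nx}. tens (topk k (x@y)) (botk k (x@y)) :: 'k hopf2)
      = (\<Sum>k\<in>{0..<?nx}. tens (topk k x) (botk k x @ y))"
    by (rule sum.cong) (auto simp: topk_append botk_append)
  also have "(\<Sum>k\<in>{?nx..?nx+?ny}. tens (topk k (x@y)) (botk k (x@y)) :: 'k hopf2)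
      = (\<Sum>k\<in>{?nx..?nx+?ny}. tens (x @ topk (k - ?nx) y) (botk (k - ?nx) y))"
    by (rule sum.cong) (auto simp: topk_append botk_append)
  also have "\<dots> = (\<Sum>j\<in>{0..?ny}. tens (x @ topk j y) (botk j y))"
    by (rule sum.reindex_bij_witness[of _ "\<lambda>j. j + ?nx" "\<lambda>k. k - ?nx"]) auto
  also have "\<dots> = lmul x (Dc y)"
    by (simp add: Dc_def lmul_sum)
  finally have A: "(Dc (x @ y) :: 'k hopf2) = (\<Sum>k\<in>{0..<?nx}. tens (topk k x) (botk k x @ y)) + lmul x (Dc y)" .
  have "rmul (Dc x) y = (\<Sum>k\<in>{0..?nx}. tens (topk k x) (botk k x @ y) :: 'k hopf2)"
    by (simp add: Dc_def rmul_sum)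
  also have "\<dots> = (\<Sum>k\<in>{0..<?nx}. tens (topk k x) (botk k x @ y)) + tens x y"
    by (simp add: atLeast0AtMost atLeast0LessThan lessThan_Suc_atMost[symmetric] topk_all botk_all)
  finally show ?thesis using A by (simp add: algebra_simps)
qed

lemma Dc_Bplus: "(Dc (Bplus x) :: 'k::field hopf2) = tens (Bplus x) [] + id_Bplus (Dc x)"
proof -
  have "(Dc (Bplus x) :: 'k hopf2) = (\<Sum>k\<in>{0..Suc (nvf x)}. tens (topk k [Node x]) (botk k [Node x]))"
    by (simp add: Dc_def Bplus_def)
  also have "\<dots> = (\<Sum>k\<in>{0..nvf x}. tens (topk k [Node x]) (botk k [Node x])) + tens [Node x] []"
    by (simp add: topk_all)
  also have "(\<Sum>k\<in>{0..nvf x}. tens (topk k [Node x]) (botk k [Node x]) :: 'k hopf2)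
     = (\<Sum>k\<in>{0..nvf x}. id_Bplus (tens (topk k x) (botk k x)))"
    by (rule sum.cong) (auto simp: Bplus_def)
  also have "\<dots> = id_Bplus (Dc x)"
    by (simp add: Dc_def idB_sum)
  finally show ?thesis by (simp add: Bplus_def)
qed

lemma Dc_coproduct: "is_coproduct Dc"
  unfolding is_coproduct_def using Dc_nil Dc_append Dc_Bplus by blast

lemma coproduct_unique:
  assumes "is_coproduct D1" "is_coproduct D2"
  shows "D1 = D2"
proof
  fix z
  show "D1 z = D2 z"
  proof (induction z rule: measure_induct_rule[of "size_list size"])
    case (less z)
    show ?case
    proof (cases z)
      case Nil then show ?thesis using assms by (simp add: is_coproduct_def)
    next
      case (Cons t ts)
      show ?thesis
      proof (cases ts)
        case Nil
        obtain x where t: "t = Node x" by (cases t)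
        have "D1 x = D2 x" using less Cons Nil t by simp
        then show ?thesis using assms Cons Nil t
          unfolding is_coproduct_def Bplus_def by metis
      next
        case (Cons t2 ts2)
        have z: "z = t # ts" by fact
        have "D1 [t] = D2 [t]" using less z Cons by simp
        moreover have "D1 ts = D2 ts" using less z by simp
        moreover have "z = [t] @ ts" using z by simp
        ultimately show ?thesis using assms unfolding is_coproduct_def by metis
      qed
    qed
  qed
qed

lemma Delta_eq: "Delta = Dc"
  unfolding Delta_def
proof (rule the_equality)
  show "is_coproduct Dc" by (rule Dc_coproduct)
  fix D assume "is_coproduct D"
  then show "D = Dc" using Dc_coproduct by (rule coproduct_unique)
qed



lemma pair_ext_gamma:
  "pair_ext p (Poly_Mapping.single a 1) (gamma y) =
     (case y of [] \<Rightarrow> 0 | t # G \<Rightarrow> if t = dot then p a G else 0)"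
  by (cases y) (auto simp: pair_ext_def gamma_def)

lemma pair_tens_Dc:
  "pair_tens p a b (Delta z) = (\<Sum>k\<in>{0..nvf z}. p a (topk k z) * p b (botk k z))"
  by (simp add: Delta_eq pair_tens_fl Dc_def fl_sum tens_def)

lemma pairing_unique:
  assumes "is_pairing p1" "is_pairing (p2 :: pforest \<Rightarrow> pforest \<Rightarrow> 'k::field)"
  shows "p1 = p2"
proof -
  have "\<forall>z. p1 x z = p2 x z" for x
  proof (induction x rule: measure_induct_rule[of "size_list size"])
    case (less x)
    show ?case
    proof (cases x)
      case Nil then show ?thesis using assms by (simp add: is_pairing_def)
    next
      case (Cons t ts)
      show ?thesis
      proof (cases ts)
        case Nil
        obtain a where t: "t = Node a" by (cases t)
        have IH: "p1 a = p2 a" using less Cons Nil t by auto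
        have "p1 [Node a] z = p2 [Node a] z" for z
          using assms IH unfolding is_pairing_def Bplus_def pair_ext_gamma by (cases z) auto
        then show ?thesis using Cons Nil t by simp
      next
        case (Cons t2 ts2)
        have x: "x = [t] @ ts" using \<open>x = t # ts\<close> by simp
        have IH1: "p1 [t] = p2 [t]" using less x Cons by auto
        have IH2: "p1 ts = p2 ts" using less x by auto
        have "p1 ([t] @ ts) z = p2 ([t] @ ts) z" for z
        proof -
          have e1: "p1 ([t] @ ts) z = (\<Sum>k\<in>{0..nvf z}. p1 ts (topk k z) * p1 [t] (botk k z))"
            using assms(1) unfolding is_pairing_def pair_tens_Dc by blast
          have e2: "p2 ([t] @ ts) z = (\<Sum>k\<in>{0..nvf z}. p2 ts (topk k z) * p2 [t] (botk k z))"
            using assms(2) unfolding is_pairing_def pair_tens_Dc by blast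
          show ?thesis unfolding e1 e2 IH1 IH2 ..
        qed
        then show ?thesis using x by simp
      qed
    qed
  qed
  then show ?thesis by blast
qed

lemma pairing_eq:
  assumes "is_pairing (q :: pforest \<Rightarrow> pforest \<Rightarrow> 'k::field)"
  shows "pairing = q"
  unfolding pairing_def
proof (rule the_equality)
  show "is_pairing q" by fact
  fix p assume "is_pairing (p :: pforest \<Rightarrow> pforest \<Rightarrow> 'k)"
  then show "p = q" using assms by (rule pairing_unique)
qed



lemma left_rec_noprefix: "left_rec s t \<Longrightarrow> \<not> prefix s t \<and> \<not> prefix t s"
  by (induction s t rule: left_rec.induct) auto

lemma left_rec_asym: "left_rec s t \<Longrightarrow> \<not> left_rec t s"
  by (induction s t rule: left_rec.induct) auto

lemma geq_left_iff: "geq_left s t \<longleftrightarrow> left_rec s t"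
  using left_rec_noprefix unfolding geq_left_def geq_high_def by blast

lemma geq_hl_iff: "geq_hl s t \<longleftrightarrow> prefix t s \<or> left_rec s t"
  unfolding geq_hl_def geq_left_iff geq_high_def ..

lemma geq_hl_antisym: "geq_hl a b \<Longrightarrow> geq_hl b a \<Longrightarrow> a = b"
  unfolding geq_hl_iff using left_rec_noprefix left_rec_asym prefix_order.antisym by blast

definition cnd :: "nat list \<Rightarrow> nat list \<Rightarrow> nat list \<Rightarrow> nat list \<Rightarrow> bool" where
  "cnd x y sx sy \<longleftrightarrow>
        (geq_high y x \<longrightarrow> geq_left sx sy) \<and>
        (geq_left y x \<longrightarrow> geq_hl sx sy) \<and>
        (geq_high sy sx \<longrightarrow> geq_left x y) \<and>
        (geq_left sy sx \<longrightarrow> geq_hl x y)"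

definition Sgen :: "nat list set \<Rightarrow> nat list set \<Rightarrow> (nat list \<Rightarrow> nat list) set" where
  "Sgen V W = {\<sigma>. \<sigma> \<in> extensional V \<and> bij_betw \<sigma> V W \<and>
     (\<forall>x\<in>V. \<forall>y\<in>V. x \<noteq> y \<longrightarrow> cnd x y (\<sigma> x) (\<sigma> y))}"

lemma Sbij_Sgen: "Sbij F G = Sgen (Vert F) (Vert G)"
  by (simp add: Sbij_def Sgen_def cnd_def)

definition oiso :: "nat list set \<Rightarrow> (nat list \<Rightarrow> nat list) \<Rightarrow> bool" where
  "oiso V f \<longleftrightarrow> (\<forall>a\<in>V. \<forall>b\<in>V. (prefix (f a) (f b) \<longleftrightarrow> prefix a b) \<and> (left_rec (f a) (f b) \<longleftrightarrow> left_rec a b))"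

lemma oiso_inj: "oiso V f \<Longrightarrow> inj_on f V"
  unfolding oiso_def inj_on_def by (metis prefix_order.antisym prefix_order.refl)

lemma oiso_inv: "oiso V f \<Longrightarrow> oiso (f ` V) (inv_into V f)"
  using oiso_inj[of V f] unfolding oiso_def by auto

lemma cnd_iso:
  assumes "prefix x' y' = prefix x y" "prefix y' x' = prefix y x"
    "left_rec x' y' = left_rec x y" "left_rec y' x' = left_rec y x"
    "prefix a' b' = prefix a b" "prefix b' a' = prefix b a"
    "left_rec a' b' = left_rec a b" "left_rec b' a' = left_rec b a"
  shows "cnd x' y' a' b' = cnd x y a b"
  unfolding cnd_def geq_hl_iff geq_left_iff geq_high_def assms ..

lemma Sgen_finite:
  assumes "finite V" "finite W"
  shows "finite (Sgen V W)"
proof -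
  have "Sgen V W \<subseteq> PiE V (\<lambda>_. W)"
    unfolding Sgen_def PiE_def Pi_def bij_betw_def by auto
  moreover have "finite (PiE V (\<lambda>_. W))" using assms by (simp add: finite_PiE)
  ultimately show ?thesis by (rule finite_subset)
qed

lemma Sgen_le:
  assumes fin: "finite V" "finite W" and iso: "oiso V \<phi>" "oiso W \<psi>"
  shows "card (Sgen V W) \<le> card (Sgen (\<phi> ` V) (\<psi> ` W))"
proof -
  let ?g = "inv_into V \<phi>"
  define M where "M \<sigma> = restrict (\<psi> \<circ> \<sigma> \<circ> ?g) (\<phi> ` V)" for \<sigma>
  have injphi: "inj_on \<phi> V" and injpsi: "inj_on \<psi> W" using iso oiso_inj by auto
  have gphi: "?g (\<phi> v) = v" if "v \<in> V" for v using injphi that by simp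
  have Mv: "M \<sigma> (\<phi> v) = \<psi> (\<sigma> v)" if "v \<in> V" for \<sigma> v
    using that gphi by (simp add: M_def)
  have "inj_on M (Sgen V W)"
  proof
    fix \<sigma>1 \<sigma>2 assume s1: "\<sigma>1 \<in> Sgen V W" and s2: "\<sigma>2 \<in> Sgen V W" and eq: "M \<sigma>1 = M \<sigma>2"
    show "\<sigma>1 = \<sigma>2"
    proof
      fix v
      show "\<sigma>1 v = \<sigma>2 v"
      proof (cases "v \<in> V")
        case True
        have "\<psi> (\<sigma>1 v) = \<psi> (\<sigma>2 v)" using eq Mv[OF True] by metis
        moreover have "\<sigma>1 v \<in> W" "\<sigma>2 v \<in> W" using s1 s2 True
          unfolding Sgen_def bij_betw_def by auto
        ultimately show ?thesis using injpsi by (meson inj_onD)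
      next
        case False then show ?thesis using s1 s2 unfolding Sgen_def extensional_def by auto
      qed
    qed
  qed
  moreover have "M ` Sgen V W \<subseteq> Sgen (\<phi> ` V) (\<psi> ` W)"
  proof
    fix \<tau> assume "\<tau> \<in> M ` Sgen V W"
    then obtain \<sigma> where s: "\<sigma> \<in> Sgen V W" and t: "\<tau> = M \<sigma>" by auto
    have bs: "bij_betw \<sigma> V W" using s by (simp add: Sgen_def)
    have b1: "bij_betw ?g (\<phi> ` V) V" using injphi by (simp add: bij_betw_inv_into inj_on_imp_bij_betw)
    have b3: "bij_betw \<psi> W (\<psi> ` W)" using injpsi by (simp add: inj_on_imp_bij_betw)
    have "bij_betw (\<psi> \<circ> \<sigma> \<circ> ?g) (\<phi> ` V) (\<psi> ` W)"
      using bij_betw_trans[OF bij_betw_trans[OF b1 bs] b3] by (simp add: comp_assoc)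
    then have "bij_betw \<tau> (\<phi> ` V) (\<psi> ` W)"
      unfolding t M_def by (rule bij_betw_cong[THEN iffD1, rotated]) simp
    moreover have "\<tau> \<in> extensional (\<phi> ` V)" by (simp add: t M_def)
    moreover have "cnd x' y' (\<tau> x') (\<tau> y')" if xyV: "x' \<in> \<phi> ` V" "y' \<in> \<phi> ` V" "x' \<noteq> y'" for x' y'
    proof -
      obtain x y where x: "x \<in> V" "x' = \<phi> x" and y: "y \<in> V" "y' = \<phi> y" using xyV(1,2) by blast
      have "x \<noteq> y" using xyV x y by auto
      then have c: "cnd x y (\<sigma> x) (\<sigma> y)" using s x y unfolding Sgen_def by auto
      have sx: "\<sigma> x \<in> W" "\<sigma> y \<in> W" using bs x y unfolding bij_betw_def by auto
      have "cnd (\<phi> x) (\<phi> y) (\<psi> (\<sigma> x)) (\<psi> (\<sigma> y)) = cnd x y (\<sigma> x) (\<sigma> y)"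
        apply (rule cnd_iso)
        using iso x y sx unfolding oiso_def by blast+
      then show ?thesis using c x y t Mv by simp
    qed
    ultimately show "\<tau> \<in> Sgen (\<phi> ` V) (\<psi> ` W)" unfolding Sgen_def by blast
  qed
  moreover have "finite (Sgen (\<phi> ` V) (\<psi> ` W))" using fin by (simp add: Sgen_finite)
  ultimately show ?thesis by (rule card_inj_on_le)
qed

lemma Sgen_iso:
  assumes fin: "finite V" "finite W" and iso: "oiso V \<phi>" "oiso W \<psi>"
  shows "card (Sgen (\<phi> ` V) (\<psi> ` W)) = card (Sgen V W)"
proof (rule antisym)
  show "card (Sgen V W) \<le> card (Sgen (\<phi> ` V) (\<psi> ` W))" using Sgen_le[OF assms] .
  have "card (Sgen (\<phi> ` V) (\<psi> ` W)) \<le> card (Sgen (inv_into V \<phi> ` \<phi> ` V) (inv_into W \<psi> ` \<psi> ` W))"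
    using fin iso by (intro Sgen_le oiso_inv) auto
  also have "inv_into V \<phi> ` \<phi> ` V = V" using oiso_inj[OF iso(1)] by simp
  also have "inv_into W \<psi> ` \<psi> ` W = W" using oiso_inj[OF iso(2)] by simp
  finally show "card (Sgen (\<phi> ` V) (\<psi> ` W)) \<le> card (Sgen V W)" .
qed

lemma Sgen_card_ne:
  assumes "finite V" "finite W" "card V \<noteq> card W"
  shows "Sgen V W = {}"
  using assms bij_betw_same_card unfolding Sgen_def by blast



lemma cnd_cross:
  assumes "left_rec a b" "geq_hl sb sa" "sa \<noteq> sb"
  shows "cnd a b sa sb" "cnd b a sb sa"
proof -
  have n1: "\<not> prefix a b" "\<not> prefix b a" "\<not> left_rec b a"
    using assms(1) left_rec_noprefix left_rec_asym by blast+
  have n2: "\<not> geq_hl sa sb" using assms(2,3) geq_hl_antisym by blast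
  show "cnd a b sa sb" "cnd b a sb sa"
    using n1 n2 assms(1,2) unfolding cnd_def geq_hl_iff geq_left_iff geq_high_def by blast+
qed

lemma cnd_root:
  assumes "prefix r b" "r \<noteq> b" "left_rec u sb"
  shows "cnd r b u sb" "cnd b r sb u"
proof -
  have n1: "\<not> prefix b r" "\<not> left_rec b r" "\<not> left_rec r b"
    using assms(1,2) left_rec_noprefix prefix_order.antisym by blast+
  have n2: "\<not> prefix u sb" "\<not> prefix sb u" "\<not> left_rec sb u"
    using assms(3) left_rec_noprefix left_rec_asym by blast+
  show "cnd r b u sb" "cnd b r sb u"
    using n1 n2 assms unfolding cnd_def geq_hl_iff geq_left_iff geq_high_def by blast+
qed

lemma Sgen_split:
  assumes fin: "finite V1" "finite V2" "finite W1" "finite W2"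
    and disj: "V1 \<inter> V2 = {}" "W1 \<inter> W2 = {}"
    and cardeq: "card V2 = card W2"
    and left: "\<forall>a\<in>V1. \<forall>b\<in>V2. left_rec a b"
    and top: "\<forall>u\<in>W1. \<forall>w\<in>W2. geq_hl w u"
  shows "card (Sgen (V1 \<union> V2) (W1 \<union> W2)) = card (Sgen V2 W2) * card (Sgen V1 W1)"
proof -
  let ?V = "V1 \<union> V2" and ?W = "W1 \<union> W2"
  have key: "\<sigma> ` V2 = W2 \<and> \<sigma> ` V1 = W1" if s: "\<sigma> \<in> Sgen ?V ?W" for \<sigma>
  proof -
    have inj: "inj_on \<sigma> ?V" and im: "\<sigma> ` ?V = ?W" using s unfolding Sgen_def bij_betw_def by auto
    have c: "cnd x y (\<sigma> x) (\<sigma> y)" if "x \<in> ?V" "y \<in> ?V" "x \<noteq> y" for x y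
      using s that unfolding Sgen_def by blast
    have cV2: "card (\<sigma> ` V2) = card W2" using inj cardeq by (metis card_image inj_on_Un)
    have sub: "\<sigma> ` V2 \<subseteq> W2"
    proof (rule ccontr)
      assume "\<not> \<sigma> ` V2 \<subseteq> W2"
      then obtain b where b: "b \<in> V2" "\<sigma> b \<notin> W2" by auto
      then have bW1: "\<sigma> b \<in> W1" using im by auto
      have "\<not> W2 \<subseteq> \<sigma> ` V2"
      proof
        assume "W2 \<subseteq> \<sigma> ` V2"
        then have "W2 = \<sigma> ` V2" using cV2 fin by (metis card_subset_eq finite_imageI)
        then show False using b by auto
      qed
      then obtain w where w: "w \<in> W2" "w \<notin> \<sigma> ` V2" by auto
      then obtain a where a: "a \<in> ?V" "w = \<sigma> a" using im by (metis UnCI imageE)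
      then have aV1: "a \<in> V1" using w by auto
      have "a \<noteq> b" using aV1 b disj by auto
      then have "cnd b a (\<sigma> b) (\<sigma> a)" using c aV1 b by auto
      then have "geq_hl (\<sigma> b) (\<sigma> a)"
        using left aV1 b unfolding cnd_def geq_left_iff by blast
      moreover have "geq_hl (\<sigma> a) (\<sigma> b)" using top bW1 w a by auto
      ultimately have "\<sigma> a = \<sigma> b" by (rule geq_hl_antisym[rotated])
      then show False using bW1 w a disj by auto
    qed
    have e2: "\<sigma> ` V2 = W2" using sub cV2 fin by (simp add: card_subset_eq)
    have "\<sigma> ` V1 \<inter> \<sigma> ` V2 = {}" using inj disj
      by (metis inj_on_image_Int image_empty sup.cobounded1 sup.cobounded2)
    moreover have "\<sigma> ` V1 \<union> W2 = W1 \<union> W2" using im e2 by (simp add: image_Un)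
    ultimately have e1: "\<sigma> ` V1 = W1" using e2 disj by blast
    show ?thesis using e1 e2 by simp
  qed
  define R where "R \<sigma> = (restrict \<sigma> V2, restrict \<sigma> V1)" for \<sigma> :: "nat list \<Rightarrow> nat list"
  have "bij_betw R (Sgen ?V ?W) (Sgen V2 W2 \<times> Sgen V1 W1)"
  proof (rule bij_betw_imageI)
    show "inj_on R (Sgen ?V ?W)"
    proof
      fix \<sigma>1 \<sigma>2 assume s: "\<sigma>1 \<in> Sgen ?V ?W" "\<sigma>2 \<in> Sgen ?V ?W" and e: "R \<sigma>1 = R \<sigma>2"
      show "\<sigma>1 = \<sigma>2"
      proof
        fix v
        show "\<sigma>1 v = \<sigma>2 v"
        proof (cases "v \<in> ?V")
          case True then show ?thesis using e unfolding R_def by (metis Pair_inject Un_iff restrict_apply')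
        next
          case False then show ?thesis using s unfolding Sgen_def extensional_def by auto
        qed
      qed
    qed
    show "R ` Sgen ?V ?W = Sgen V2 W2 \<times> Sgen V1 W1"
    proof
      show "R ` Sgen ?V ?W \<subseteq> Sgen V2 W2 \<times> Sgen V1 W1"
      proof
        fix p assume "p \<in> R ` Sgen ?V ?W"
        then obtain \<sigma> where s: "\<sigma> \<in> Sgen ?V ?W" and p: "p = R \<sigma>" by auto
        have inj: "inj_on \<sigma> ?V" using s unfolding Sgen_def bij_betw_def by auto
        have k: "\<sigma> ` V2 = W2" "\<sigma> ` V1 = W1" using key[OF s] by auto
        have c: "cnd x y (\<sigma> x) (\<sigma> y)" if "x \<in> ?V" "y \<in> ?V" "x \<noteq> y" for x y
          using s that unfolding Sgen_def by blast
        have "restrict \<sigma> V2 \<in> Sgen V2 W2"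
          unfolding Sgen_def using k inj c
          by (auto simp: bij_betw_def inj_on_def)
        moreover have "restrict \<sigma> V1 \<in> Sgen V1 W1"
          unfolding Sgen_def using k inj c
          by (auto simp: bij_betw_def inj_on_def)
        ultimately show "p \<in> Sgen V2 W2 \<times> Sgen V1 W1" using p R_def by simp
      qed
      show "Sgen V2 W2 \<times> Sgen V1 W1 \<subseteq> R ` Sgen ?V ?W"
      proof
        fix p assume "p \<in> Sgen V2 W2 \<times> Sgen V1 W1"
        then obtain \<tau>2 \<tau>1 where p: "p = (\<tau>2, \<tau>1)" and t2: "\<tau>2 \<in> Sgen V2 W2" and t1: "\<tau>1 \<in> Sgen V1 W1"
          by auto
        define \<sigma> where "\<sigma> v = (if v \<in> V2 then \<tau>2 v else \<tau>1 v)" for v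
        have ext: "\<sigma> \<in> extensional ?V" using t1 unfolding Sgen_def extensional_def \<sigma>_def by auto
        have b2: "bij_betw \<sigma> V2 W2" using t2 unfolding Sgen_def
          by (auto intro: bij_betw_cong[THEN iffD1, rotated] simp: \<sigma>_def)
        have b1: "bij_betw \<sigma> V1 W1"
        proof -
          have "bij_betw \<tau>1 V1 W1" using t1 unfolding Sgen_def by auto
          moreover have "\<forall>v\<in>V1. \<sigma> v = \<tau>1 v" using disj by (auto simp: \<sigma>_def)
          ultimately show ?thesis using bij_betw_cong by metis
        qed
        have "bij_betw \<sigma> (V1 \<union> V2) (W1 \<union> W2)" using bij_betw_combine[OF b1 b2 disj(2)] .
        moreover have "cnd x y (\<sigma> x) (\<sigma> y)" if xy: "x \<in> ?V" "y \<in> ?V" "x \<noteq> y" for x y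
        proof -
          have sx: "x \<in> V2 \<Longrightarrow> \<sigma> x \<in> W2" "x \<in> V1 \<Longrightarrow> \<sigma> x \<in> W1"
                   "y \<in> V2 \<Longrightarrow> \<sigma> y \<in> W2" "y \<in> V1 \<Longrightarrow> \<sigma> y \<in> W1"
            using b1 b2 unfolding bij_betw_def by auto
          have ix: "inj_on \<sigma> ?V" using \<open>bij_betw \<sigma> ?V ?W\<close> unfolding bij_betw_def by auto
          have neq: "\<sigma> x \<noteq> \<sigma> y" using ix xy by (meson inj_onD)
          consider "x \<in> V2" "y \<in> V2" | "x \<in> V1" "y \<in> V1" | "x \<in> V1" "y \<in> V2" | "x \<in> V2" "y \<in> V1"
            using xy by auto
          then show ?thesis
          proof cases
            case 1 then show ?thesis using t2 xy unfolding Sgen_def \<sigma>_def by auto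
          next
            case 2
            then have "x \<notin> V2" "y \<notin> V2" using disj by auto
            then show ?thesis using 2 t1 xy unfolding Sgen_def \<sigma>_def by auto
          next
            case 3
            have a: "left_rec x y" using left 3 by auto
            have b: "geq_hl (\<sigma> y) (\<sigma> x)" using top 3 sx by auto
            show ?thesis using cnd_cross(1)[OF a b neq] .
          next
            case 4
            have a: "left_rec y x" using left 4 by auto
            have b: "geq_hl (\<sigma> x) (\<sigma> y)" using top 4 sx by auto
            show ?thesis using cnd_cross(2)[OF a b neq[symmetric]] .
          qed
        qed
        ultimately have s: "\<sigma> \<in> Sgen ?V ?W" using ext unfolding Sgen_def by blast
        have "restrict \<sigma> V2 = \<tau>2" using t2 unfolding Sgen_def \<sigma>_def restrict_def extensional_def by auto
        moreover have "restrict \<sigma> V1 = \<tau>1" using t1 disj unfolding Sgen_def \<sigma>_def restrict_def extensional_def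
          by (auto simp: fun_eq_iff)
        ultimately have "R \<sigma> = p" using p R_def by simp
        then show "p \<in> R ` Sgen ?V ?W" using s by blast
      qed
    qed
  qed
  then have "card (Sgen ?V ?W) = card (Sgen V2 W2 \<times> Sgen V1 W1)" by (rule bij_betw_same_card)
  then show ?thesis by (simp add: card_cartesian_product)
qed

lemma Sgen_root_val:
  assumes s: "\<sigma> \<in> Sgen V W" and r: "r \<in> V" and pr: "\<forall>b\<in>V. b \<noteq> r \<longrightarrow> prefix r b"
  shows "\<forall>w\<in>W. w \<noteq> \<sigma> r \<longrightarrow> left_rec (\<sigma> r) w"
proof (intro ballI impI)
  fix w assume w: "w \<in> W" "w \<noteq> \<sigma> r"
  have im: "\<sigma> ` V = W" using s unfolding Sgen_def bij_betw_def by auto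
  obtain b where b: "b \<in> V" "w = \<sigma> b" using w im by auto
  have "b \<noteq> r" using b w by auto
  then have "cnd r b (\<sigma> r) (\<sigma> b)" using s r b unfolding Sgen_def by auto
  then show "left_rec (\<sigma> r) w" using pr b \<open>b \<noteq> r\<close> unfolding cnd_def geq_high_def geq_left_iff by auto
qed

lemma Sgen_root:
  assumes fin: "finite V2" "finite W2" and nin: "r \<notin> V2" "u \<notin> W2"
    and pr: "\<forall>b\<in>V2. prefix r b" and lr: "\<forall>w\<in>W2. left_rec u w"
  shows "card (Sgen (insert r V2) (insert u W2)) = card (Sgen V2 W2)"
proof -
  let ?V = "insert r V2" and ?W = "insert u W2"
  have key: "\<sigma> r = u \<and> \<sigma> ` V2 = W2" if s: "\<sigma> \<in> Sgen ?V ?W" for \<sigma>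
  proof -
    have inj: "inj_on \<sigma> ?V" and im: "\<sigma> ` ?V = ?W" using s unfolding Sgen_def bij_betw_def by auto
    have L: "\<forall>w\<in>?W. w \<noteq> \<sigma> r \<longrightarrow> left_rec (\<sigma> r) w"
      using Sgen_root_val[OF s] pr by auto
    have sr: "\<sigma> r = u"
    proof (rule ccontr)
      assume ne: "\<sigma> r \<noteq> u"
      then have "left_rec (\<sigma> r) u" using L by auto
      moreover have "\<sigma> r \<in> W2" using im ne by auto
      then have "left_rec u (\<sigma> r)" using lr by auto
      ultimately show False using left_rec_asym by blast
    qed
    have "\<sigma> ` V2 = W2"
    proof -
      have "\<sigma> r \<notin> \<sigma> ` V2" using inj nin by auto
      moreover have "insert (\<sigma> r) (\<sigma> ` V2) = insert (\<sigma> r) W2" using im sr by simp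
      ultimately show ?thesis using sr nin insert_ident by metis
    qed
    then show ?thesis using sr by simp
  qed
  define R where "R \<sigma> = restrict \<sigma> V2" for \<sigma> :: "nat list \<Rightarrow> nat list"
  have "bij_betw R (Sgen ?V ?W) (Sgen V2 W2)"
  proof (rule bij_betw_imageI)
    show "inj_on R (Sgen ?V ?W)"
    proof
      fix \<sigma>1 \<sigma>2 assume s: "\<sigma>1 \<in> Sgen ?V ?W" "\<sigma>2 \<in> Sgen ?V ?W" and e: "R \<sigma>1 = R \<sigma>2"
      show "\<sigma>1 = \<sigma>2"
      proof
        fix v
        show "\<sigma>1 v = \<sigma>2 v"
        proof (cases "v \<in> ?V")
          case True then show ?thesis using e key[OF s(1)] key[OF s(2)] unfolding R_def
            by (metis insert_iff restrict_apply')
        next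
          case False then show ?thesis using s unfolding Sgen_def extensional_def by auto
        qed
      qed
    qed
    show "R ` Sgen ?V ?W = Sgen V2 W2"
    proof
      show "R ` Sgen ?V ?W \<subseteq> Sgen V2 W2"
      proof
        fix \<tau> assume "\<tau> \<in> R ` Sgen ?V ?W"
        then obtain \<sigma> where s: "\<sigma> \<in> Sgen ?V ?W" and p: "\<tau> = R \<sigma>" by auto
        have inj: "inj_on \<sigma> ?V" using s unfolding Sgen_def bij_betw_def by auto
        have k: "\<sigma> ` V2 = W2" using key[OF s] by auto
        have c: "cnd x y (\<sigma> x) (\<sigma> y)" if "x \<in> ?V" "y \<in> ?V" "x \<noteq> y" for x y
          using s that unfolding Sgen_def by blast
        show "\<tau> \<in> Sgen V2 W2"
          unfolding Sgen_def p R_def using k inj c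
          by (auto simp: bij_betw_def inj_on_def)
      qed
      show "Sgen V2 W2 \<subseteq> R ` Sgen ?V ?W"
      proof
        fix \<tau> assume t: "\<tau> \<in> Sgen V2 W2"
        define \<sigma> where "\<sigma> = \<tau>(r := u)"
        have ext: "\<sigma> \<in> extensional ?V" using t unfolding Sgen_def extensional_def \<sigma>_def by auto
        have b2: "bij_betw \<sigma> V2 W2" using t nin unfolding Sgen_def
          by (auto intro: bij_betw_cong[THEN iffD1, rotated] simp: \<sigma>_def)
        have b1: "bij_betw \<sigma> {r} {u}" by (simp add: \<sigma>_def)
        have "bij_betw \<sigma> ({r} \<union> V2) ({u} \<union> W2)" using bij_betw_combine[OF b1 b2] nin by auto
        then have b: "bij_betw \<sigma> ?V ?W" by simp
        moreover have "cnd x y (\<sigma> x) (\<sigma> y)" if xy: "x \<in> ?V" "y \<in> ?V" "x \<noteq> y" for x y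
        proof -
          have sx: "x \<in> V2 \<Longrightarrow> \<sigma> x \<in> W2" "y \<in> V2 \<Longrightarrow> \<sigma> y \<in> W2"
            using b2 unfolding bij_betw_def by auto
          consider "x \<in> V2" "y \<in> V2" | "x = r" "y \<in> V2" | "x \<in> V2" "y = r"
            using xy by auto
          then show ?thesis
          proof cases
            case 1
            then have "x \<noteq> r" "y \<noteq> r" using nin by auto
            then show ?thesis using 1 t xy unfolding Sgen_def \<sigma>_def by auto
          next
            case 2 then show ?thesis using cnd_root(1)[of r y u "\<sigma> y"] pr lr sx xy by (auto simp: \<sigma>_def)
          next
            case 3 then show ?thesis using cnd_root(2)[of r x u "\<sigma> x"] pr lr sx xy by (auto simp: \<sigma>_def)
          qed
        qed
        ultimately have s: "\<sigma> \<in> Sgen ?V ?W" using ext unfolding Sgen_def by blast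
        have "R \<sigma> = \<tau>" using t nin unfolding Sgen_def R_def \<sigma>_def restrict_def extensional_def
          by (auto simp: fun_eq_iff)
        then show "\<tau> \<in> R ` Sgen ?V ?W" using s by blast
      qed
    qed
  qed
  then show ?thesis by (rule bij_betw_same_card)
qed



fun sh :: "nat \<Rightarrow> nat list \<Rightarrow> nat list" where
  "sh n [] = []"
| "sh n (i # r) = (i + n) # r"

lemma sh_sh[simp]: "sh n (sh m x) = sh (n + m) x"
  by (cases x) auto

lemma sh_nil_iff[simp]: "sh n x = [] \<longleftrightarrow> x = []"
  by (cases x) auto

lemma sh_Suc_ne[simp]: "sh (Suc m) x \<noteq> 0 # y" "0 # y \<noteq> sh (Suc m) x"
  by (cases x; auto)+

lemma hd_sh[simp]: "x \<noteq> [] \<Longrightarrow> hd (sh n x) = hd x + n"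
  by (cases x) auto

lemma inj_sh: "inj (sh n)"
proof
  fix x y assume "sh n x = sh n y" then show "x = y"
    by (cases x; cases y) auto
qed

lemma fvf_sh: "forest_verts_from n ts = sh n ` forest_verts_from 0 ts"
proof (induction ts arbitrary: n)
  case Nil then show ?case by simp
next
  case (Cons t ts)
  have "forest_verts_from n (t # ts) = Cons n ` tree_verts t \<union> sh (Suc n) ` forest_verts_from 0 ts"
    using Cons[of "Suc n"] by simp
  moreover have "sh n ` forest_verts_from 0 (t # ts) = sh n ` Cons 0 ` tree_verts t \<union> sh n ` sh 1 ` forest_verts_from 0 ts"
    using Cons[of 1] by (simp add: image_Un)
  moreover have "sh n ` Cons 0 ` tree_verts t = Cons n ` tree_verts t" by (auto simp: image_image)
  moreover have "sh n ` sh 1 ` X = sh (Suc n) ` X" for X by (auto simp: image_image)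
  ultimately show ?case by simp
qed

lemma Vert_nil[simp]: "Vert [] = {}"
  by (simp add: Vert_def)

lemma Vert_Cons: "Vert (t # ts) = Cons 0 ` tree_verts t \<union> sh 1 ` Vert ts"
  unfolding Vert_def using fvf_sh[of 1 ts] by simp

lemma tree_verts_Node: "tree_verts (Node f) = insert [] (Vert f)"
  by (simp add: Vert_def)

lemma fvf_append: "forest_verts_from n (x @ y) = forest_verts_from n x \<union> forest_verts_from (n + length x) y"
  by (induction x arbitrary: n) auto

lemma Vert_append: "Vert (x @ y) = Vert x \<union> sh (length x) ` Vert y"
  unfolding Vert_def fvf_append using fvf_sh[of "length x" y] by simp

lemma fvf_props: "v \<in> forest_verts_from n x \<Longrightarrow> v \<noteq> [] \<and> n \<le> hd v \<and> hd v < n + length x"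
  by (induction x arbitrary: n) fastforce+

lemma Vert_nonempty: "v \<in> Vert x \<Longrightarrow> v \<noteq> []"
  using fvf_props unfolding Vert_def by blast

lemma Vert_hd: "v \<in> Vert x \<Longrightarrow> hd v < length x"
  using fvf_props unfolding Vert_def by fastforce

lemma Vert_finite_card: "finite (Vert F) \<and> card (Vert F) = nvf F"
proof (induction F rule: forest_induct)
  case 1 then show ?case by simp
next
  case (2 f ts)
  have d: "Cons 0 ` insert [] (Vert f) \<inter> sh 1 ` Vert ts = {}"
    by auto
  have c1: "card (Cons 0 ` insert [] (Vert f)) = Suc (nvf f)"
  proof -
    have "card (Cons 0 ` insert [] (Vert f)) = card (insert [] (Vert f))" by (rule card_image) (rule inj_onI, simp)
    also have "\<dots> = Suc (nvf f)" using 2 Vert_nonempty[of "[]" f] by (subst card_insert_disjoint) auto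
    finally show ?thesis .
  qed
  have c2: "card (sh 1 ` Vert ts) = nvf ts"
    using 2 card_image[OF inj_on_subset[OF inj_sh[of 1]]] by simp
  have f: "finite (Cons 0 ` insert [] (Vert f))" "finite (sh 1 ` Vert ts)" using 2 by auto
  show ?case unfolding Vert_Cons tree_verts_Node card_Un_disjoint[OF f d] c1 c2 using f by simp
qed

lemma Vert_finite[simp]: "finite (Vert F)" and card_Vert: "card (Vert F) = nvf F"
  using Vert_finite_card by auto

section \<open>order isomorphism lemmas\<close>

lemma prefix_sh: "x \<noteq> [] \<Longrightarrow> y \<noteq> [] \<Longrightarrow> prefix (sh n x) (sh n y) \<longleftrightarrow> prefix x y"
  by (cases x; cases y) auto
lemma left_rec_sh: "x \<noteq> [] \<Longrightarrow> y \<noteq> [] \<Longrightarrow> left_rec (sh n x) (sh n y) \<longleftrightarrow> left_rec x y"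
  by (cases x; cases y) auto
lemma geq_hl_sh: "x \<noteq> [] \<Longrightarrow> y \<noteq> [] \<Longrightarrow> geq_hl (sh n x) (sh n y) \<longleftrightarrow> geq_hl x y"
  by (simp add: geq_hl_iff prefix_sh left_rec_sh)
lemma geq_hl_Cons: "geq_hl (n # x) (n # y) \<longleftrightarrow> geq_hl x y"
  by (simp add: geq_hl_iff)

lemma oiso_id: "oiso V (\<lambda>x. x)"
  by (simp add: oiso_def)

lemma oiso_cong: "oiso V f \<Longrightarrow> (\<And>v. v \<in> V \<Longrightarrow> g v = f v) \<Longrightarrow> oiso V g"
  by (simp add: oiso_def)

lemma oiso_post_Cons: "oiso V g \<Longrightarrow> oiso V (\<lambda>v. n # g v)"
  by (simp add: oiso_def)

lemma oiso_post_sh: "oiso V g \<Longrightarrow> (\<And>v. v \<in> V \<Longrightarrow> g v \<noteq> []) \<Longrightarrow> oiso V (\<lambda>v. sh n (g v))"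
  by (simp add: oiso_def prefix_sh left_rec_sh)

lemma oiso_conj_Cons: "oiso X g \<Longrightarrow> oiso (Cons n ` X) (\<lambda>v. n # g (tl v))"
  by (simp add: oiso_def)

definition unsh :: "nat \<Rightarrow> nat list \<Rightarrow> nat list" where
  "unsh n v = (hd v - n) # tl v"

lemma unsh_sh[simp]: "x \<noteq> [] \<Longrightarrow> unsh n (sh n x) = x"
  by (cases x) (auto simp: unsh_def)

lemma oiso_conj_sh:
  assumes "oiso X g" "\<And>x. x \<in> X \<Longrightarrow> x \<noteq> [] \<and> g x \<noteq> []"
  shows "oiso (sh n ` X) (\<lambda>v. sh n (g (unsh n v)))"
  using assms unfolding oiso_def by (auto simp: prefix_sh left_rec_sh)

definition sep :: "nat list set \<Rightarrow> nat list set \<Rightarrow> bool" where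
  "sep A B \<longleftrightarrow> (\<forall>a\<in>A. \<forall>b\<in>B. a \<noteq> [] \<and> b \<noteq> [] \<and> hd a < hd b)"

lemma sep_rel:
  assumes "a \<noteq> []" "b \<noteq> []" "hd a < hd b"
  shows "\<not> prefix a b" "\<not> prefix b a" "left_rec a b" "\<not> left_rec b a"
  using assms by (cases a; cases b; auto)+

lemma oiso_union_sep:
  assumes "oiso A f" "oiso B f" "sep A B" "sep (f ` A) (f ` B)"
  shows "oiso (A \<union> B) f"
  unfolding oiso_def
proof (intro ballI)
  fix a b assume ab: "a \<in> A \<union> B" "b \<in> A \<union> B"
  consider "a \<in> A" "b \<in> A" | "a \<in> B" "b \<in> B" | "a \<in> A" "b \<in> B" | "a \<in> B" "b \<in> A"
    using ab by auto
  then show "(prefix (f a) (f b) \<longleftrightarrow> prefix a b) \<and> (left_rec (f a) (f b) \<longleftrightarrow> left_rec a b)"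
  proof cases
    case 1 then show ?thesis using assms(1) unfolding oiso_def by blast
  next
    case 2 then show ?thesis using assms(2) unfolding oiso_def by blast
  next
    case 3
    have s1: "a \<noteq> []" "b \<noteq> []" "hd a < hd b" using assms(3) 3 unfolding sep_def by auto
    have s2: "f a \<noteq> []" "f b \<noteq> []" "hd (f a) < hd (f b)" using assms(4) 3 unfolding sep_def by auto
    show ?thesis using sep_rel[OF s1] sep_rel[OF s2] by blast
  next
    case 4
    have s1: "b \<noteq> []" "a \<noteq> []" "hd b < hd a" using assms(3) 4 unfolding sep_def by auto
    have s2: "f b \<noteq> []" "f a \<noteq> []" "hd (f b) < hd (f a)" using assms(4) 4 unfolding sep_def by auto
    show ?thesis using sep_rel[OF s1] sep_rel[OF s2] by blast
  qed
qed

lemma oiso_insert_nil: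
  assumes "oiso V f" "[] \<notin> V" "\<And>v. v \<in> V \<Longrightarrow> f v \<noteq> []"
  shows "oiso (insert [] V) (\<lambda>r. if r = [] then [] else f r)"
  using assms unfolding oiso_def
  by (auto simp: Nil_prefix dest: prefix_Nil[THEN iffD1] split: if_splits)

lemma sep_Cons0_sh1:
  assumes "\<And>x. x \<in> Y \<Longrightarrow> x \<noteq> []"
  shows "sep (Cons 0 ` X) (sh 1 ` Y)"
  using assms unfolding sep_def by auto



definition decomp_prop :: "nat \<Rightarrow> pforest \<Rightarrow> (nat list \<Rightarrow> nat list) \<Rightarrow> (nat list \<Rightarrow> nat list) \<Rightarrow> bool" where
  "decomp_prop k z iA iB \<longleftrightarrow> oiso (Vert (topk k z)) iA \<and> oiso (Vert (botk k z)) iB \<and>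
     iA ` Vert (topk k z) \<inter> iB ` Vert (botk k z) = {} \<and>
     iA ` Vert (topk k z) \<union> iB ` Vert (botk k z) = Vert z \<and>
     (\<forall>a\<in>Vert (topk k z). \<forall>b\<in>Vert (botk k z). geq_hl (iA a) (iB b))"


lemma decomp: "k \<le> nvf z \<Longrightarrow> \<exists>iA iB. decomp_prop k z iA iB"
proof (induction k z rule: topk.induct)
  case (1 k)
  then show ?case unfolding decomp_prop_def by (auto intro: oiso_id)
next
  case (2 k f ts)
  show ?case
  proof (cases "Suc (nvf f) \<le> k")
    case True
    define k' where "k' = k - Suc (nvf f)"
    have "k' \<le> nvf ts" using 2(3) True by (simp add: k'_def)
    then obtain iA' iB' where IH: "decomp_prop k' ts iA' iB'" using 2(1) True k'_def by blast
    let ?T = "tree_verts (Node f)"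
    let ?X = "Vert (topk k' ts)" and ?Y = "Vert (botk k' ts)"
    have top: "topk k (Node f # ts) = Node f # topk k' ts" and bot: "botk k (Node f # ts) = botk k' ts"
      using True by (simp_all add: k'_def)
    define iA where "iA v = (if hd v = 0 then v else sh 1 (iA' (unsh 1 v)))" for v
    define iB where "iB v = sh 1 (iB' v)" for v
    have IHo: "oiso ?X iA'" "oiso ?Y iB'" and IHi: "iA' ` ?X \<union> iB' ` ?Y = Vert ts"
      and IHd: "iA' ` ?X \<inter> iB' ` ?Y = {}"
      and IHt: "\<forall>a\<in>?X. \<forall>b\<in>?Y. geq_hl (iA' a) (iB' b)"
      using IH unfolding decomp_prop_def by auto
    have neA: "x \<in> ?X \<Longrightarrow> x \<noteq> [] \<and> iA' x \<noteq> []" for x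
      using IHi Vert_nonempty by blast
    have neB: "x \<in> ?Y \<Longrightarrow> iB' x \<noteq> []" for x
      using IHi Vert_nonempty by blast
    have VT: "Vert (topk k (Node f # ts)) = Cons 0 ` ?T \<union> sh 1 ` ?X"
      unfolding top Vert_Cons ..
    have iA1: "iA v = v" if "v \<in> Cons 0 ` ?T" for v using that by (auto simp: iA_def)
    have iA2: "iA v = sh 1 (iA' (unsh 1 v))" if "v \<in> sh 1 ` ?X" for v
      using that neA by (auto simp: iA_def)
    have imA: "iA ` Vert (topk k (Node f # ts)) = Cons 0 ` ?T \<union> sh 1 ` iA' ` ?X"
      unfolding VT image_Un using iA1 iA2 neA by (auto simp: image_image cong: image_cong)
    have oA: "oiso (Vert (topk k (Node f # ts))) iA"
      unfolding VT
    proof (rule oiso_union_sep)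
      show "oiso (Cons 0 ` ?T) iA" using oiso_id iA1 by (rule oiso_cong)
      show "oiso (sh 1 ` ?X) iA" using oiso_conj_sh[OF IHo(1) neA] iA2 by (rule oiso_cong)
      show "sep (Cons 0 ` ?T) (sh 1 ` ?X)" using neA by (intro sep_Cons0_sh1) auto
      have "iA ` Cons 0 ` ?T = (\<lambda>v. v) ` Cons 0 ` ?T"
        by (rule image_cong[OF refl iA1])
      then have e1: "iA ` Cons 0 ` ?T = Cons 0 ` ?T" by (simp only: image_ident)
      have "iA ` sh 1 ` ?X = (\<lambda>v. sh 1 (iA' (unsh 1 v))) ` sh 1 ` ?X"
        by (rule image_cong[OF refl iA2])
      also have "\<dots> = sh 1 ` iA' ` ?X"
        using neA by (auto simp: image_image)
      finally have e2: "iA ` sh 1 ` ?X = sh 1 ` iA' ` ?X" .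
      show "sep (iA ` Cons 0 ` ?T) (iA ` sh 1 ` ?X)" unfolding e1 e2
        by (intro sep_Cons0_sh1, elim imageE, simp add: neA)
    qed
    have oB: "oiso (Vert (botk k (Node f # ts))) iB"
      unfolding bot iB_def using IHo(2) neB by (rule oiso_post_sh)
    have imB: "iB ` Vert (botk k (Node f # ts)) = sh 1 ` iB' ` ?Y"
      unfolding bot iB_def by (auto simp: image_image)
    have d: "iA ` Vert (topk k (Node f # ts)) \<inter> iB ` Vert (botk k (Node f # ts)) = {}"
    proof -
      have "sh 1 ` iA' ` ?X \<inter> sh 1 ` iB' ` ?Y = {}"
        using IHd inj_sh by (metis image_Int image_empty)
      moreover have "Cons 0 ` ?T \<inter> sh 1 ` iB' ` ?Y = {}" by auto
      ultimately show ?thesis unfolding imA imB by blast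
    qed
    have u: "iA ` Vert (topk k (Node f # ts)) \<union> iB ` Vert (botk k (Node f # ts)) = Vert (Node f # ts)"
      unfolding imA imB Vert_Cons IHi[symmetric] image_Un by blast
    have t: "\<forall>a\<in>Vert (topk k (Node f # ts)). \<forall>b\<in>Vert (botk k (Node f # ts)). geq_hl (iA a) (iB b)"
    proof (intro ballI)
      fix a b assume a: "a \<in> Vert (topk k (Node f # ts))" and b: "b \<in> Vert (botk k (Node f # ts))"
      have bY: "b \<in> ?Y" using b bot by simp
      have iBb: "iB b = sh 1 (iB' b)" by (simp add: iB_def)
      from a consider (c) "a \<in> Cons 0 ` ?T" | (s) "a \<in> sh 1 ` ?X" unfolding VT by blast
      then show "geq_hl (iA a) (iB b)"
      proof cases
        case c
        then obtain p where "a = 0 # p" by auto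
        moreover obtain j q where "iB' b = j # q" using neB[OF bY] by (cases "iB' b") auto
        ultimately show ?thesis using iA1[OF c] iBb by (simp add: geq_hl_iff)
      next
        case s
        then obtain x where x: "x \<in> ?X" "a = sh 1 x" by auto
        have "iA a = sh 1 (iA' x)" using iA2[OF s] x neA by simp
        then show ?thesis using iBb IHt x bY neA neB geq_hl_sh by simp
      qed
    qed
    show ?thesis unfolding decomp_prop_def using oA oB d u t by blast
  next
    case False
    then have kf: "k \<le> nvf f" by simp
    then obtain iA' iB' where IH: "decomp_prop k f iA' iB'" using 2(2) False by blast
    let ?X = "Vert (topk k f)" and ?Y = "Vert (botk k f)"
    have top: "topk k (Node f # ts) = topk k f" and bot: "botk k (Node f # ts) = Node (botk k f) # ts"
      using False by simp_all
    have IHo: "oiso ?X iA'" "oiso ?Y iB'" and IHi: "iA' ` ?X \<union> iB' ` ?Y = Vert f"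
      and IHd: "iA' ` ?X \<inter> iB' ` ?Y = {}"
      and IHt: "\<forall>a\<in>?X. \<forall>b\<in>?Y. geq_hl (iA' a) (iB' b)"
      using IH unfolding decomp_prop_def by auto
    have neA: "x \<in> ?X \<Longrightarrow> iA' x \<noteq> []" for x
      using IHi Vert_nonempty by blast
    have neB: "x \<in> ?Y \<Longrightarrow> iB' x \<noteq> []" for x
      using IHi Vert_nonempty by blast
    define iA where "iA v = 0 # iA' v" for v
    define iB0 where "iB0 r = (if r = [] then [] else iB' r)" for r
    define iB where "iB v = (if hd v = 0 then 0 # iB0 (tl v) else v)" for v
    let ?Z = "insert [] ?Y"
    have VB: "Vert (botk k (Node f # ts)) = Cons 0 ` ?Z \<union> sh 1 ` Vert ts"
      unfolding bot Vert_Cons tree_verts_Node ..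
    have oA: "oiso (Vert (topk k (Node f # ts))) iA"
      unfolding top iA_def using IHo(1) by (rule oiso_post_Cons)
    have imA: "iA ` Vert (topk k (Node f # ts)) = Cons 0 ` iA' ` ?X"
      unfolding top iA_def by (auto simp: image_image)
    have o0: "oiso ?Z iB0" unfolding iB0_def
      using IHo(2) Vert_nonempty neB by (intro oiso_insert_nil) auto
    have iB1: "iB v = 0 # iB0 (tl v)" if "v \<in> Cons 0 ` ?Z" for v using that by (auto simp: iB_def)
    have iB2: "iB v = v" if "v \<in> sh 1 ` Vert ts" for v
      using that Vert_nonempty[of _ ts] by (auto simp: iB_def)
    have im0: "iB0 ` ?Z = insert [] (iB' ` ?Y)"
    proof -
      have "iB0 ` ?Y = iB' ` ?Y"
      proof (rule image_cong[OF refl])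
        fix x assume "x \<in> ?Y"
        then have "x \<noteq> []" by (rule Vert_nonempty)
        then show "iB0 x = iB' x" by (simp add: iB0_def)
      qed
      moreover have "iB0 [] = []" by (simp add: iB0_def)
      ultimately show ?thesis by (simp only: image_insert)
    qed
    have imB1: "iB ` Cons 0 ` ?Z = Cons 0 ` insert [] (iB' ` ?Y)"
    proof -
      have "iB ` Cons 0 ` ?Z = (\<lambda>v. 0 # iB0 (tl v)) ` Cons 0 ` ?Z"
        by (rule image_cong[OF refl iB1])
      then have "iB ` Cons 0 ` ?Z = Cons 0 ` iB0 ` ?Z" by (simp only: image_image list.sel)
      then show ?thesis by (simp only: im0)
    qed
    have "iB ` sh 1 ` Vert ts = (\<lambda>v. v) ` sh 1 ` Vert ts"
      by (rule image_cong[OF refl iB2])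
    then have imB2: "iB ` sh 1 ` Vert ts = sh 1 ` Vert ts" by (simp only: image_ident)
    have imB: "iB ` Vert (botk k (Node f # ts)) = Cons 0 ` insert [] (iB' ` ?Y) \<union> sh 1 ` Vert ts"
      unfolding VB image_Un imB1 imB2 ..
    have oB: "oiso (Vert (botk k (Node f # ts))) iB"
      unfolding VB
    proof (rule oiso_union_sep)
      show "oiso (Cons 0 ` ?Z) iB" using oiso_conj_Cons[OF o0] iB1 by (rule oiso_cong)
      show "oiso (sh 1 ` Vert ts) iB" using oiso_id iB2 by (rule oiso_cong)
      show "sep (Cons 0 ` ?Z) (sh 1 ` Vert ts)" using Vert_nonempty by (intro sep_Cons0_sh1)
      show "sep (iB ` Cons 0 ` ?Z) (iB ` sh 1 ` Vert ts)" unfolding imB1 imB2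
        using Vert_nonempty by (intro sep_Cons0_sh1)
    qed
    have d: "iA ` Vert (topk k (Node f # ts)) \<inter> iB ` Vert (botk k (Node f # ts)) = {}"
    proof -
      have "Cons 0 ` iA' ` ?X \<inter> Cons 0 ` insert [] (iB' ` ?Y) = {}"
        using IHd neA by (auto dest: sym)
      moreover have "Cons 0 ` iA' ` ?X \<inter> sh 1 ` Vert ts = {}" by auto
      ultimately show ?thesis unfolding imA imB by blast
    qed
    have u: "iA ` Vert (topk k (Node f # ts)) \<union> iB ` Vert (botk k (Node f # ts)) = Vert (Node f # ts)"
      unfolding imA imB Vert_Cons tree_verts_Node IHi[symmetric] image_Un image_insert by blast
    have t: "\<forall>a\<in>Vert (topk k (Node f # ts)). \<forall>b\<in>Vert (botk k (Node f # ts)). geq_hl (iA a) (iB b)"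
    proof (intro ballI)
      fix a b assume a: "a \<in> Vert (topk k (Node f # ts))" and b: "b \<in> Vert (botk k (Node f # ts))"
      have aX: "a \<in> ?X" using a top by simp
      from b consider (r) "b = [0]" | (c) b' where "b' \<in> ?Y" "b = 0 # b'" | (s) "b \<in> sh 1 ` Vert ts"
        unfolding VB by blast
      then show "geq_hl (iA a) (iB b)"
      proof cases
        case r then show ?thesis by (simp add: iA_def iB_def iB0_def geq_hl_iff)
      next
        case c
        then have "iB b = 0 # iB' b'" using Vert_nonempty[of b' "botk k f"] by (simp add: iB_def iB0_def)
        then show ?thesis using IHt aX c by (simp add: iA_def geq_hl_Cons)
      next
        case s
        then obtain w where w: "w \<in> Vert ts" "b = sh 1 w" by auto
        obtain j q where "w = j # q" using Vert_nonempty[OF w(1)] by (cases w) auto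
        then show ?thesis using iB2[OF s] w by (simp add: iA_def geq_hl_iff)
      qed
    qed
    show ?thesis unfolding decomp_prop_def using oA oB d u t by blast
  qed
qed



lemma oiso_sh_Vert: "oiso (Vert y) (sh n)"
  using oiso_post_sh[OF oiso_id, of "Vert y"] Vert_nonempty by auto

lemma card_oiso_image: "oiso V f \<Longrightarrow> card (f ` V) = card V"
  by (simp add: card_image oiso_inj)

lemma Vert_empty_iff: "Vert z = {} \<longleftrightarrow> z = []"
  using card_Vert[of z] Vert_finite[of z]
  by (metis Vert_nil card.empty nvf.elims add_is_0 nat.distinct(1))

lemma Sgen_empty_V: "Sgen {} W = (if W = {} then {\<lambda>_. undefined} else {})"
  unfolding Sgen_def by (auto simp: bij_betw_def extensional_def)

lemma card_split:
  "card (Sgen (Vert (x @ y)) (Vert z)) =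
     (\<Sum>k\<in>{0..nvf z}. card (Sgen (Vert y) (Vert (topk k z))) * card (Sgen (Vert x) (Vert (botk k z))))"
proof (cases "nvf y \<le> nvf z")
  case True
  let ?k = "nvf y"
  have others: "card (Sgen (Vert y) (Vert (topk k z))) = 0" if "k \<in> {0..nvf z}" "k \<noteq> ?k" for k
  proof -
    have "card (Vert (topk k z)) = k" using that by (simp add: card_Vert nvf_topk)
    then have "Sgen (Vert y) (Vert (topk k z)) = {}" using that by (intro Sgen_card_ne) (auto simp: card_Vert)
    then show ?thesis by simp
  qed
  have sum: "(\<Sum>k\<in>{0..nvf z}. card (Sgen (Vert y) (Vert (topk k z))) * card (Sgen (Vert x) (Vert (botk k z))))
     = card (Sgen (Vert y) (Vert (topk ?k z))) * card (Sgen (Vert x) (Vert (botk ?k z)))"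
  proof -
    have "?k \<in> {0..nvf z}" using True by simp
    then have "(\<Sum>k\<in>{0..nvf z}. card (Sgen (Vert y) (Vert (topk k z))) * card (Sgen (Vert x) (Vert (botk k z))))
      = card (Sgen (Vert y) (Vert (topk ?k z))) * card (Sgen (Vert x) (Vert (botk ?k z)))
        + (\<Sum>k\<in>{0..nvf z} - {?k}. card (Sgen (Vert y) (Vert (topk k z))) * card (Sgen (Vert x) (Vert (botk k z))))"
      by (intro sum.remove) auto
    moreover have "(\<Sum>k\<in>{0..nvf z} - {?k}. card (Sgen (Vert y) (Vert (topk k z))) * card (Sgen (Vert x) (Vert (botk k z)))) = 0"
      using others by (intro sum.neutral) auto
    ultimately show ?thesis by simp
  qed
  obtain iA iB where D: "decomp_prop ?k z iA iB" using decomp[OF True] by blast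
  let ?X = "Vert (topk ?k z)" and ?Y = "Vert (botk ?k z)"
  have oA: "oiso ?X iA" and oB: "oiso ?Y iB" and dj: "iA ` ?X \<inter> iB ` ?Y = {}"
    and un: "iA ` ?X \<union> iB ` ?Y = Vert z" and tp: "\<forall>a\<in>?X. \<forall>b\<in>?Y. geq_hl (iA a) (iB b)"
    using D unfolding decomp_prop_def by auto
  let ?V1 = "Vert x" and ?V2 = "sh (length x) ` Vert y"
  have "card (Sgen (?V1 \<union> ?V2) (iB ` ?Y \<union> iA ` ?X)) = card (Sgen ?V2 (iA ` ?X)) * card (Sgen ?V1 (iB ` ?Y))"
  proof (rule Sgen_split)
    show "finite ?V1" "finite ?V2" "finite (iB ` ?Y)" "finite (iA ` ?X)" by auto
    show "?V1 \<inter> ?V2 = {}"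
    proof -
      have "hd a < length x" if "a \<in> ?V1" for a using that by (rule Vert_hd)
      moreover have "hd b \<ge> length x" if "b \<in> ?V2" for b using that Vert_nonempty by auto
      ultimately show ?thesis by force
    qed
    show "iB ` ?Y \<inter> iA ` ?X = {}" using dj by blast
    show "card ?V2 = card (iA ` ?X)"
      using card_oiso_image[OF oiso_sh_Vert] card_oiso_image[OF oA] True
      by (simp add: card_Vert nvf_topk)
    show "\<forall>a\<in>?V1. \<forall>b\<in>?V2. left_rec a b"
    proof (intro ballI)
      fix a b assume a: "a \<in> ?V1" and b: "b \<in> ?V2"
      then obtain b' where b': "b' \<in> Vert y" "b = sh (length x) b'" by auto
      have "a \<noteq> []" "b \<noteq> []" "hd a < hd b" using Vert_hd[OF a] Vert_nonempty[OF a] Vert_nonempty[OF b'(1)] b'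
        by auto
      then show "left_rec a b" by (rule sep_rel)
    qed
    show "\<forall>u\<in>iB ` ?Y. \<forall>w\<in>iA ` ?X. geq_hl w u" using tp by blast
  qed
  moreover have "?V1 \<union> ?V2 = Vert (x @ y)" by (simp add: Vert_append)
  moreover have "iB ` ?Y \<union> iA ` ?X = Vert z" using un by blast
  moreover have "card (Sgen ?V2 (iA ` ?X)) = card (Sgen (Vert y) ?X)"
    by (rule Sgen_iso) (auto intro: oiso_sh_Vert oA)
  moreover have "card (Sgen ?V1 (iB ` ?Y)) = card (Sgen (Vert x) ?Y)"
    using Sgen_iso[OF _ _ oiso_id oB, of "Vert x"] by simp
  ultimately show ?thesis using sum by simp
next
  case False
  have l: "Sgen (Vert (x @ y)) (Vert z) = {}"
    using False by (intro Sgen_card_ne) (auto simp: card_Vert)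
  have "card (Sgen (Vert y) (Vert (topk k z))) = 0" if "k \<in> {0..nvf z}" for k
  proof -
    have "Sgen (Vert y) (Vert (topk k z)) = {}" using that False
      by (intro Sgen_card_ne) (auto simp: card_Vert nvf_topk)
    then show ?thesis by simp
  qed
  then show ?thesis using l by simp
qed



definition qq :: "pforest \<Rightarrow> pforest \<Rightarrow> 'k::field" where
  "qq F G = of_nat (card (Sbij F G))"

lemma qq_nil: "qq [] z = eps z"
proof (cases "z = []")
  case True then show ?thesis by (simp add: qq_def Sbij_Sgen Sgen_empty_V eps_def)
next
  case False
  then have "Vert z \<noteq> {}" using Vert_empty_iff by blast
  then show ?thesis using False by (simp add: qq_def Sbij_Sgen Sgen_empty_V eps_def)
qed

lemma qq_append: "qq (x @ y) z = pair_tens qq y x (Delta z)"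
  unfolding pair_tens_Dc qq_def Sbij_Sgen card_split by simp

lemma Vert_single: "Vert [Node x] = insert [0] (Cons 0 ` Vert x)"
  unfolding Vert_Cons tree_verts_Node Vert_nil by auto

lemma qq_Bplus: "qq (Bplus x) y = pair_ext qq (Poly_Mapping.single x 1) (gamma y)"
proof -
  let ?V = "Vert [Node x]"
  have V: "?V = insert [0] (Cons 0 ` Vert x)" by (rule Vert_single)
  have r0: "[0] \<notin> Cons 0 ` Vert x" using Vert_nonempty by auto
  show ?thesis
  proof (cases y)
    case Nil
    have "Sgen ?V (Vert y) = {}" using Nil V by (intro Sgen_card_ne) auto
    then show ?thesis using Nil by (simp add: pair_ext_gamma qq_def Sbij_Sgen Bplus_def)
  next
    case (Cons t G)
    obtain c where t: "t = Node c" by (cases t)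
    show ?thesis
    proof (cases c)
      case Nil
      have W: "Vert y = insert [0] (sh 1 ` Vert G)" using Cons t Nil by (simp add: Vert_Cons tree_verts_Node)
      have "sh 1 w \<noteq> [0]" for w by (cases w) auto
      then have u0: "[0] \<notin> sh 1 ` Vert G" by auto
      have "card (Sgen ?V (Vert y)) = card (Sgen (Cons 0 ` Vert x) (sh 1 ` Vert G))"
        unfolding V W
      proof (rule Sgen_root)
        show "finite (Cons 0 ` Vert x)" "finite (sh 1 ` Vert G)" by auto
        show "[0] \<notin> Cons 0 ` Vert x" by fact
        show "[0] \<notin> sh 1 ` Vert G" by fact
        show "\<forall>b\<in>Cons 0 ` Vert x. prefix [0] b" by auto
        show "\<forall>w\<in>sh 1 ` Vert G. left_rec [0] w"
        proof
          fix w assume "w \<in> sh 1 ` Vert G"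
          then obtain w' where "w' \<in> Vert G" "w = sh 1 w'" by auto
          then obtain j q where "w = (j + 1) # q" using Vert_nonempty by (cases w') auto
          then show "left_rec [0] w" by simp
        qed
      qed
      also have "\<dots> = card (Sgen (Vert x) (Vert G))"
        by (rule Sgen_iso) (auto intro: oiso_sh_Vert oiso_post_Cons[OF oiso_id])
      finally show ?thesis using Cons t Nil by (simp add: pair_ext_gamma qq_def Sbij_Sgen Bplus_def)
    next
      case (Cons c1 cs)
      have tnd: "t \<noteq> dot" using t Cons by simp
      obtain d where d: "c1 = Node d" by (cases c1)
      have W1: "[0] \<in> Vert y" "[0,0] \<in> Vert y"
        using \<open>y = t # G\<close> t Cons d by (auto simp: Vert_Cons)
      have "Sgen ?V (Vert y) = {}"
      proof (rule ccontr)
        assume "Sgen ?V (Vert y) \<noteq> {}"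
        then obtain \<sigma> where s: "\<sigma> \<in> Sgen ?V (Vert y)" by blast
        have "[0] \<in> ?V" using V by simp
        moreover have "\<forall>b\<in>?V. b \<noteq> [0] \<longrightarrow> prefix [0] b" using V by auto
        ultimately have L: "\<forall>w\<in>Vert y. w \<noteq> \<sigma> [0] \<longrightarrow> left_rec (\<sigma> [0]) w"
          using Sgen_root_val[OF s] by blast
        show False
        proof (cases "\<sigma> [0] = [0]")
          case True
          then show False using L W1 by auto
        next
          case False
          then have "left_rec (\<sigma> [0]) [0]" using L W1 by auto
          then show False by (cases "\<sigma> [0]") auto
        qed
      qed
      then show ?thesis using \<open>y = t # G\<close> tnd by (simp add: pair_ext_gamma qq_def Sbij_Sgen Bplus_def)
    qed
  qed
qed

lemma qq_pairing: "is_pairing qq"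
  unfolding is_pairing_def using qq_nil qq_append qq_Bplus by blast

theorem theorem24:
  fixes F G :: pforest
  shows "(pairing F G :: 'k::field) = of_nat (card (Sbij F G))"
proof -
  have "(pairing :: pforest \<Rightarrow> pforest \<Rightarrow> 'k) = qq" by (rule pairing_eq[OF qq_pairing])
  then show ?thesis by (simp add: qq_def)
qed

end
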